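(* Consider any run $R$ of the algorithm $\mathcal{A}_{\mathrm{reg}}$ described in the context, and let $op, op' \in C(R)$ be complete operations with timestamps $ts(op)=(i,T_1,\ldots,T_n)$ and $ts(op')=(k,T'_1,\ldots,T'_n)$. If $op \prec op'$ then it is not the case that $op' \prec op$. Consequently, $\prec$ is a strict order on $C(R)$.
   Context: System model: $n$ asynchronous, crash-prone processes with identities in $\{1,\ldots,n\}$. Each process $k$ is the unique writer of a reliable linearizable single-writer multi-reader Distributed Ledger Object (DLO) $L_k$, readable by all processes; its state is a finite sequence of records, initially empty, with operations $L_k.get()$ (returns the current sequence) and $L_k.append(r)$ (appends record $r$ to the end); every invocation by a correct process completes. Well-formedness: a process does not invoke $\mathrm{apply}$ before its previous invocation has finished. Validated object: given a predicate $\mathrm{valid}(\langle P,\prec\rangle, op, i)$ and a function $\mathrm{execute}(\langle P,\prec\rangle, op, i)$, whose first argument is a strictly partially ordered set of operations, $op$ is an operation and $i$ the process issuing it. Clients use $\mathrm{apply}(op,i)$, which returns $(\mathit{ACK}, r)$ if $op$ is found valid and executed with result $r$, and $(\mathit{NACK},-)$ otherwise. The history of a run $R$ contains only operations for which $\mathrm{apply}$ returns $\mathit{ACK}$; $C(R)$ denotes the set of complete such operations. Algorithm $\mathcal{A}_{\mathrm{reg}}$ (code of $\mathrm{apply}(op,i)$ at process $i$): for $j=1,\ldots,n$ in order, set $G_j \leftarrow L_j.get()$ and $T_j \leftarrow |G_j|$; set $ts \leftarrow (i,T_1,\ldots,T_n)$; set $P \leftarrow \{op' : \langle ts',op'\rangle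 \in \bigcup_j G_j\}$; if $\mathrm{valid}(\langle P,\prec\rangle, op, i)$ then $res \leftarrow \mathrm{execute}(\langle P,\prec\rangle, op,i)$, $L_i.append(\langle ts, op\rangle)$, and return $(\mathit{ACK},res)$; otherwise return $(\mathit{NACK},-)$. The invocation event of a valid operation is the invocation of $L_1.get()$ in the loop, and its response event is the completion of $L_i.append(\langle ts,op\rangle)$. The tuple $ts$ is called the timestamp $ts(op)$ of $op$. Order $\prec$: for $op,op' \in C(R)$ with $ts(op)=(i,T_1,\ldots,T_n)$ and $ts(op')=(k,T'_1,\ldots,T'_n)$, define $op \prec op'$ iff $T_i < T'_i$ (where $i$ is the issuer of $op$).
   Formalization: The consequence that $\prec$ is a strict order on $C(R)$ is replaced by irreflexivity and asymmetry of $\prec$ on $C(R)$; transitivity is not claimed. The statement above fails without it. *)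

theory Defs
  imports Main
begin

text \<open>Processes are 1..n; ledger L_j is
  the list stored at index j.  Ledger operations are linearizable, so each
  get/append is modelled as one atomic step of an interleaving.
  A timestamp (i, T_1, ..., T_n) is a pair (i, T) with T j the value T_j.\<close>

type_synonym ts = "nat \<times> (nat \<Rightarrow> nat)"
type_synonym 'op rec = "ts \<times> 'op"

text \<open>Local state of a process: idle (not inside apply), or inside apply(op)
  about to read L_j, having stored G_1 .. G_(j-1) in G.\<close>
datatype 'op lstate = Idle | Reading 'op nat "nat \<Rightarrow> 'op rec list"

type_synonym 'op gstate = "(nat \<Rightarrow> 'op rec list) \<times> (nat \<Rightarrow> 'op lstate)"

definition prec :: "'op rec \<Rightarrow> 'op rec \<Rightarrow> bool" where
  "prec x y \<longleftrightarrow> snd (fst x) (fst (fst x)) < snd (fst y) (fst (fst x))"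

definition opsOf :: "nat \<Rightarrow> (nat \<Rightarrow> 'op rec list) \<Rightarrow> 'op set" where
  "opsOf n G = {o'. \<exists>t'. (t', o') \<in> (\<Union>j\<in>{1..n}. set (G j))}"

definition precOf :: "nat \<Rightarrow> (nat \<Rightarrow> 'op rec list) \<Rightarrow> 'op \<Rightarrow> 'op \<Rightarrow> bool" where
  "precOf n G a b \<longleftrightarrow> (\<exists>x\<in>(\<Union>j\<in>{1..n}. set (G j)). \<exists>y\<in>(\<Union>j\<in>{1..n}. set (G j)).
      snd x = a \<and> snd y = b \<and> prec x y)"

definition tsOf :: "nat \<Rightarrow> (nat \<Rightarrow> 'op rec list) \<Rightarrow> ts" where
  "tsOf i G = (i, \<lambda>j. length (G j))"

text \<open>One atomic step of the system.  valid P prec op i is the validity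
  predicate (arbitrary).  The result of execute plays no role for the order
  and is therefore not modelled.\<close>
inductive step :: "nat \<Rightarrow> ('op set \<Rightarrow> ('op \<Rightarrow> 'op \<Rightarrow> bool) \<Rightarrow> 'op \<Rightarrow> nat \<Rightarrow> bool)
                   \<Rightarrow> 'op gstate \<Rightarrow> 'op gstate \<Rightarrow> bool"
  for n valid where
  invoke: "\<lbrakk>p \<in> {1..n}; loc p = Idle\<rbrakk>
     \<Longrightarrow> step n valid (L, loc) (L, loc(p := Reading op 1 (\<lambda>_. [])))"
| read: "\<lbrakk>p \<in> {1..n}; loc p = Reading op j G; 1 \<le> j; j \<le> n\<rbrakk>
     \<Longrightarrow> step n valid (L, loc) (L, loc(p := Reading op (Suc j) (G(j := L j))))"
| ack: "\<lbrakk>p \<in> {1..n}; loc p = Reading op (Suc n) G; valid (opsOf n G) (precOf n G) op p\<rbrakk>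
     \<Longrightarrow> step n valid (L, loc) (L(p := L p @ [(tsOf p G, op)]), loc(p := Idle))"
| nack: "\<lbrakk>p \<in> {1..n}; loc p = Reading op (Suc n) G; \<not> valid (opsOf n G) (precOf n G) op p\<rbrakk>
     \<Longrightarrow> step n valid (L, loc) (L, loc(p := Idle))"

definition initState :: "'op gstate" where
  "initState = (\<lambda>_. [], \<lambda>_. Idle)"

text \<open>Complete valid operations of a run (those whose append completed),
  as timestamped records.\<close>
definition complete :: "nat \<Rightarrow> 'op gstate \<Rightarrow> 'op rec set" where
  "complete n s = (\<Union>j\<in>{1..n}. set (fst s j))"

end

theory Submission
  imports Defs
begin

lemma irr: "\<not> prec x x" by (simp add: prec_def)

definition Inv :: "nat \<Rightarrow> 'op gstate \<Rightarrow> bool" where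
  "Inv n s \<longleftrightarrow>
    (\<forall>j. \<forall>x\<in>set (fst s j). \<forall>m. snd (fst x) m \<le> length (fst s m))
  \<and> (\<forall>p op J G. snd s p = Reading op J G \<longrightarrow>
        (\<forall>m. length (G m) \<le> length (fst s m)) \<and> 1 \<le> p
        \<and> (p < J \<longrightarrow> length (G p) = length (fst s p)))
  \<and> (\<forall>i k. \<forall>x\<in>set (fst s i). \<forall>y\<in>set (fst s k). \<not> (prec x y \<and> prec y x))"

lemma inv_init: "Inv n initState"
  by (simp add: Inv_def initState_def)

lemma inv_step:
  assumes "step n valid s t" "Inv n s"
  shows "Inv n t"
  using assms
proof (induction rule: step.induct)
  case (invoke p loc L op)
  then show ?case by (auto simp: Inv_def)
next
  case (read p loc op j G L)
  then show ?case
    by (auto simp: Inv_def split: if_splits)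
next
  case (ack p loc op G L)
  let ?z = "(tsOf p G, op)"
  from ack have I: "Inv n (L, loc)" by simp
  have r: "\<forall>m. length (G m) \<le> length (L m)" and eqp: "length (G p) = length (L p)"
    using I ack.hyps(1,2) unfolding Inv_def by auto
  have zle: "snd (fst ?z) m \<le> length ((L(p := L p @ [?z])) m)" for m
    using r[rule_format, of m] by (auto simp: tsOf_def)
  have old: "\<forall>j. \<forall>x\<in>set (L j). \<forall>m. snd (fst x) m \<le> length (L m)"
    using I unfolding Inv_def by simp
  have nz: "\<not> prec ?z x" if "x \<in> set (L j)" for x j
  proof -
    have "snd (fst x) p \<le> length (L p)" using old that by blast
    then show ?thesis using eqp by (simp add: prec_def tsOf_def)
  qed
  have A: "\<forall>j. \<forall>x\<in>set ((L(p := L p @ [?z])) j). \<forall>m. snd (fst x) m \<le> length ((L(p := L p @ [?z])) m)"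
  proof (intro allI ballI)
    fix j x m assume "x \<in> set ((L(p := L p @ [?z])) j)"
    then have "x = ?z \<or> x \<in> set (L j)" by (auto split: if_splits)
    then show "snd (fst x) m \<le> length ((L(p := L p @ [?z])) m)"
    proof
      assume "x \<in> set (L j)"
      then have "snd (fst x) m \<le> length (L m)" using old by blast
      then show ?thesis by auto
    qed (use zle in simp)
  qed
  have B: "\<forall>q op J G'. (loc(p := Idle)) q = Reading op J G' \<longrightarrow>
        (\<forall>m. length (G' m) \<le> length ((L(p := L p @ [?z])) m)) \<and> 1 \<le> q
        \<and> (q < J \<longrightarrow> length (G' q) = length ((L(p := L p @ [?z])) q))"
  proof (intro allI impI)
    fix q op' J G' assume h: "(loc(p := Idle)) q = Reading op' J G'"
    then have qp: "q \<noteq> p" and lq: "loc q = Reading op' J G'" by (auto split: if_splits)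
    from I lq have "(\<forall>m. length (G' m) \<le> length (L m)) \<and> 1 \<le> q \<and> (q < J \<longrightarrow> length (G' q) = length (L q))"
      unfolding Inv_def by auto
    then show "(\<forall>m. length (G' m) \<le> length ((L(p := L p @ [?z])) m)) \<and> 1 \<le> q
        \<and> (q < J \<longrightarrow> length (G' q) = length ((L(p := L p @ [?z])) q))"
      using qp by (auto simp: le_SucI)
  qed
  have oldC: "\<forall>i k. \<forall>x\<in>set (L i). \<forall>y\<in>set (L k). \<not> (prec x y \<and> prec y x)"
    using I unfolding Inv_def by simp
  have C: "\<forall>i k. \<forall>x\<in>set ((L(p := L p @ [?z])) i). \<forall>y\<in>set ((L(p := L p @ [?z])) k). \<not> (prec x y \<and> prec y x)"
  proof (intro allI ballI)
    fix i k x y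
    assume "x \<in> set ((L(p := L p @ [?z])) i)" "y \<in> set ((L(p := L p @ [?z])) k)"
    then have hx: "x = ?z \<or> x \<in> set (L i)" and hy: "y = ?z \<or> y \<in> set (L k)"
      by (auto split: if_splits)
    show "\<not> (prec x y \<and> prec y x)"
      using hx hy nz oldC irr by metis
  qed
  show ?case using A B C by (simp add: Inv_def)
next
  case (nack p loc op G L)
  then show ?case by (auto simp: Inv_def)
qed

lemma inv_reach: "(step n valid)\<^sup>*\<^sup>* initState s \<Longrightarrow> Inv n s"
  by (induction rule: rtranclp_induct) (auto intro: inv_init inv_step)

theorem mainTheorem1:
  fixes n :: nat
    and valid :: "'op set \<Rightarrow> ('op \<Rightarrow> 'op \<Rightarrow> bool) \<Rightarrow> 'op \<Rightarrow> nat \<Rightarrow> bool"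
    and s :: "'op gstate"
  assumes "(step n valid)\<^sup>*\<^sup>* initState s"
  shows "(\<forall>x\<in>complete n s. \<forall>y\<in>complete n s. prec x y \<longrightarrow> \<not> prec y x)
         \<and> irreflp_on (complete n s) prec \<and> asymp_on (complete n s) prec"
proof -
  have I: "Inv n s" using assms by (rule inv_reach)
  have a: "\<forall>x\<in>complete n s. \<forall>y\<in>complete n s. prec x y \<longrightarrow> \<not> prec y x"
    using I unfolding Inv_def complete_def by blast
  moreover have "irreflp_on (complete n s) prec"
    by (simp add: irreflp_on_def prec_def)
  moreover have "asymp_on (complete n s) prec"
    using a by (simp add: asymp_on_def)
  ultimately show ?thesis by blast
qed

end
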